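(* Let $(X,\mathrm{dist})$ be a complete metric space, $\Sigma$ a metric space, and $\{U_\sigma(t,\tau)\}_{\sigma\in\Sigma}$ a family of processes on $X$. Then the family is uniformly asymptotically compact if and only if it is totally uniformly dissipative.
   Context: A process on $X$ is a family of maps $U(t,\tau):X\to X$, indexed by reals $t\ge\tau$, with $U(\tau,\tau)=\mathrm{id}_X$ and $U(t,\tau)=U(t,s)U(s,\tau)$ for $t\ge s\ge\tau$; no continuity is assumed. For nonempty $B,C\subset X$, $\delta_X(B,C)=\sup_{x\in B}\inf_{\xi\in C}\mathrm{dist}(x,\xi)$. A set $K\subset X$ is uniformly attracting if for every bounded $C\subset X$, $\lim_{t-\tau\to\infty}\sup_{\sigma\in\Sigma}\delta_X(U_\sigma(t,\tau)C,K)=0$. The family is uniformly asymptotically compact if there exists a compact uniformly attracting set. A set $B\subset X$ is uniformly absorbing if for every bounded $C\subset X$ there is $t_e=t_e(C)$ with $U_\sigma(t,\tau)C\subset B$ for all $\sigma\in\Sigma$ whenever $t-\tau\ge t_e$. For $\varepsilon>0$, the $\varepsilon$-neighborhood of $K$ is $\mathcal{U}_\varepsilon(K)=\bigcup_{x\in K}\{\xi\in X:\mathrm{dist}(x,\xi)<\varepsilon\}$; $K$ is uniformly $\varepsilon$-absorbing if $\mathcal{U}_\varepsilon(K)$ is uniformly absorbing. The family is uniformly $\varepsilon$-dissipative if there is a finite uniformly $\varepsilon$-absorbing set, and totally uniformly dissipative if it is uniformly $\varepsilon$-dissipative for every $\varepsilon>0$. *)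

theory Defs
  imports "HOL-Analysis.Analysis"
begin

definition is_process :: "(real \<Rightarrow> real \<Rightarrow> 'a \<Rightarrow> 'a) \<Rightarrow> bool" where
  "is_process U \<longleftrightarrow>
     (\<forall>\<tau>. U \<tau> \<tau> = id) \<and>
     (\<forall>t s \<tau>. \<tau> \<le> s \<and> s \<le> t \<longrightarrow> U t \<tau> = U t s \<circ> U s \<tau>)"

definition family_of_processes :: "'s set \<Rightarrow> ('s \<Rightarrow> real \<Rightarrow> real \<Rightarrow> 'a \<Rightarrow> 'a) \<Rightarrow> bool" where
  "family_of_processes \<Sigma> U \<longleftrightarrow> (\<forall>\<sigma>\<in>\<Sigma>. is_process (U \<sigma>))"

text \<open>lim over t - tau to infinity of sup over sigma of the Hausdorff semi-distance
  delta(U(t,tau)C, K) equals 0, unfolded into epsilon form.\<close>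
definition uniformly_attracting ::
  "'s set \<Rightarrow> ('s \<Rightarrow> real \<Rightarrow> real \<Rightarrow> 'a::metric_space \<Rightarrow> 'a) \<Rightarrow> 'a set \<Rightarrow> bool" where
  "uniformly_attracting \<Sigma> U K \<longleftrightarrow>
     (\<forall>C. bounded C \<longrightarrow> (\<forall>\<epsilon>>0. \<exists>T. \<forall>\<sigma>\<in>\<Sigma>. \<forall>t \<tau>. \<tau> \<le> t \<and> t - \<tau> \<ge> T \<longrightarrow>
        (\<forall>x\<in>C. \<exists>\<xi>\<in>K. dist (U \<sigma> t \<tau> x) \<xi> < \<epsilon>)))"

definition uniformly_asymptotically_compact ::
  "'s set \<Rightarrow> ('s \<Rightarrow> real \<Rightarrow> real \<Rightarrow> 'a::metric_space \<Rightarrow> 'a) \<Rightarrow> bool" where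
  "uniformly_asymptotically_compact \<Sigma> U \<longleftrightarrow>
     (\<exists>K. compact K \<and> uniformly_attracting \<Sigma> U K)"

definition uniformly_absorbing ::
  "'s set \<Rightarrow> ('s \<Rightarrow> real \<Rightarrow> real \<Rightarrow> 'a::metric_space \<Rightarrow> 'a) \<Rightarrow> 'a set \<Rightarrow> bool" where
  "uniformly_absorbing \<Sigma> U B \<longleftrightarrow>
     (\<forall>C. bounded C \<longrightarrow> (\<exists>te. \<forall>\<sigma>\<in>\<Sigma>. \<forall>t \<tau>. \<tau> \<le> t \<and> t - \<tau> \<ge> te \<longrightarrow>
        U \<sigma> t \<tau> ` C \<subseteq> B))"

definition eps_nbhd :: "real \<Rightarrow> 'a::metric_space set \<Rightarrow> 'a set" where
  "eps_nbhd \<epsilon> K = (\<Union>x\<in>K. {\<xi>. dist x \<xi> < \<epsilon>})"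

definition uniformly_eps_absorbing ::
  "'s set \<Rightarrow> ('s \<Rightarrow> real \<Rightarrow> real \<Rightarrow> 'a::metric_space \<Rightarrow> 'a) \<Rightarrow> real \<Rightarrow> 'a set \<Rightarrow> bool" where
  "uniformly_eps_absorbing \<Sigma> U \<epsilon> K \<longleftrightarrow> uniformly_absorbing \<Sigma> U (eps_nbhd \<epsilon> K)"

definition uniformly_eps_dissipative ::
  "'s set \<Rightarrow> ('s \<Rightarrow> real \<Rightarrow> real \<Rightarrow> 'a::metric_space \<Rightarrow> 'a) \<Rightarrow> real \<Rightarrow> bool" where
  "uniformly_eps_dissipative \<Sigma> U \<epsilon> \<longleftrightarrow>
     (\<exists>K. finite K \<and> uniformly_eps_absorbing \<Sigma> U \<epsilon> K)"

definition totally_uniformly_dissipative ::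
  "'s set \<Rightarrow> ('s \<Rightarrow> real \<Rightarrow> real \<Rightarrow> 'a::metric_space \<Rightarrow> 'a) \<Rightarrow> bool" where
  "totally_uniformly_dissipative \<Sigma> U \<longleftrightarrow> (\<forall>\<epsilon>>0. uniformly_eps_dissipative \<Sigma> U \<epsilon>)"

end

theory Submission
  imports Defs
begin

lemma cpt_aux:
  fixes G :: "nat \<Rightarrow> 'a::{metric_space,complete_space} set"
  assumes fin: "\<And>n. finite (G n)"
  shows "compact (\<Inter>n. \<Union>f\<in>G n. cball f (1/(real n+1)))"
proof -
  let ?S = "\<Inter>n. \<Union>f\<in>G n. cball f (1/(real n+1))"
  have cl: "closed ?S"
    by (intro closed_INT ballI closed_UN fin) auto
  have tb: "\<exists>k. finite k \<and> ?S \<subseteq> (\<Union>x\<in>k. ball x e)" if e: "e > 0" for e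
  proof -
    obtain n where n: "inverse (real (Suc n)) < e" using reals_Archimedean e by blast
    have "?S \<subseteq> (\<Union>x\<in>G n. ball x e)"
    proof
      fix y assume "y \<in> ?S"
      then have "y \<in> (\<Union>f\<in>G n. cball f (1/(real n+1)))" by blast
      then obtain f where "f \<in> G n" "dist f y \<le> 1/(real n+1)" by auto
      moreover have "1/(real n + 1) = inverse (real (Suc n))" by (simp add: field_simps)
      ultimately show "y \<in> (\<Union>x\<in>G n. ball x e)" using n by force
    qed
    then show ?thesis using fin by blast
  qed
  show ?thesis unfolding compact_eq_totally_bounded
    using cl tb complete_eq_closed by blast
qed

theorem theorem3p8:
  fixes \<Sigma> :: "'s::metric_space set"
    and U :: "'s \<Rightarrow> real \<Rightarrow> real \<Rightarrow> 'a::{metric_space,complete_space} \<Rightarrow> 'a"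
  assumes "family_of_processes \<Sigma> U"
  shows "uniformly_asymptotically_compact \<Sigma> U \<longleftrightarrow> totally_uniformly_dissipative \<Sigma> U"
proof
  assume "uniformly_asymptotically_compact \<Sigma> U"
  then obtain K where K: "compact K" "uniformly_attracting \<Sigma> U K"
    unfolding uniformly_asymptotically_compact_def by blast
  show "totally_uniformly_dissipative \<Sigma> U"
    unfolding totally_uniformly_dissipative_def
  proof (intro allI impI)
    fix \<epsilon> :: real assume e: "\<epsilon> > 0"
    obtain F where F: "finite F" "K \<subseteq> (\<Union>x\<in>F. ball x (\<epsilon>/2))"
      using K(1) e unfolding compact_eq_totally_bounded by (meson half_gt_zero)
    have "uniformly_absorbing \<Sigma> U (eps_nbhd \<epsilon> F)"
      unfolding uniformly_absorbing_def
    proof (intro allI impI)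
      fix C :: "'a set" assume "bounded C"
      then obtain T where T: "\<forall>\<sigma>\<in>\<Sigma>. \<forall>t \<tau>. \<tau> \<le> t \<and> t - \<tau> \<ge> T \<longrightarrow>
        (\<forall>x\<in>C. \<exists>\<xi>\<in>K. dist (U \<sigma> t \<tau> x) \<xi> < \<epsilon>/2)"
        using K(2) e unfolding uniformly_attracting_def by (meson half_gt_zero)
      show "\<exists>te. \<forall>\<sigma>\<in>\<Sigma>. \<forall>t \<tau>. \<tau> \<le> t \<and> t - \<tau> \<ge> te \<longrightarrow> U \<sigma> t \<tau> ` C \<subseteq> eps_nbhd \<epsilon> F"
      proof (intro exI ballI allI impI subsetI)
        fix \<sigma> t \<tau> y assume s: "\<sigma> \<in> \<Sigma>" and tt: "\<tau> \<le> t \<and> t - \<tau> \<ge> T" and y: "y \<in> U \<sigma> t \<tau> ` C"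
        then obtain x where x: "x \<in> C" "y = U \<sigma> t \<tau> x" by blast
        obtain \<xi> where \<xi>: "\<xi> \<in> K" "dist y \<xi> < \<epsilon>/2" using T s tt x by blast
        obtain f where f: "f \<in> F" "dist f \<xi> < \<epsilon>/2" using F(2) \<xi>(1) by auto
        have "dist f y < \<epsilon>" using f(2) \<xi>(2) dist_triangle[of f y \<xi>] by (simp add: dist_commute)
        then show "y \<in> eps_nbhd \<epsilon> F" unfolding eps_nbhd_def using f(1) by blast
      qed
    qed
    then show "uniformly_eps_dissipative \<Sigma> U \<epsilon>"
      unfolding uniformly_eps_dissipative_def uniformly_eps_absorbing_def using F(1) by blast
  qed
next
  assume "totally_uniformly_dissipative \<Sigma> U"
  then have "\<forall>n::nat. \<exists>F. finite F \<and> uniformly_absorbing \<Sigma> U (eps_nbhd (1/(real n+1)) F)"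
    unfolding totally_uniformly_dissipative_def uniformly_eps_dissipative_def
      uniformly_eps_absorbing_def by simp
  then obtain F where F: "\<And>n. finite (F n)" "\<And>n. uniformly_absorbing \<Sigma> U (eps_nbhd (1/(real n+1)) (F n))"
    by metis
  define K where "K = (\<Inter>n. \<Union>f\<in>F n. cball f (1/(real n+1)))"
  have cK: "compact K" unfolding K_def by (rule cpt_aux[OF F(1)])
  have "uniformly_attracting \<Sigma> U K"
    unfolding uniformly_attracting_def
  proof (intro allI impI, rule ccontr)
    fix C :: "'a set" and \<epsilon> :: real
    assume bC: "bounded C" and e: "\<epsilon> > 0" and
      no: "\<not> (\<exists>T. \<forall>\<sigma>\<in>\<Sigma>. \<forall>t \<tau>. \<tau> \<le> t \<and> t - \<tau> \<ge> T \<longrightarrow>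
        (\<forall>x\<in>C. \<exists>\<xi>\<in>K. dist (U \<sigma> t \<tau> x) \<xi> < \<epsilon>))"
    then have "\<forall>k::nat. \<exists>\<sigma> t \<tau> x. \<sigma> \<in> \<Sigma> \<and> \<tau> \<le> t \<and> t - \<tau> \<ge> real k \<and> x \<in> C \<and>
        (\<forall>\<xi>\<in>K. dist (U \<sigma> t \<tau> x) \<xi> \<ge> \<epsilon>)"
      by (meson not_less)
    then obtain sg tt ta xx where seq: "\<And>k. sg k \<in> \<Sigma> \<and> ta k \<le> tt k \<and> tt k - ta k \<ge> real k \<and> xx k \<in> C \<and>
        (\<forall>\<xi>\<in>K. dist (U (sg k) (tt k) (ta k) (xx k)) \<xi> \<ge> \<epsilon>)"
      by metis
    define z where "z k = U (sg k) (tt k) (ta k) (xx k)" for k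
    have "\<forall>n. \<exists>N::nat. \<forall>k\<ge>N. z k \<in> eps_nbhd (1/(real n+1)) (F n)"
    proof
      fix n
      obtain te where te: "\<forall>\<sigma>\<in>\<Sigma>. \<forall>t \<tau>. \<tau> \<le> t \<and> t - \<tau> \<ge> te \<longrightarrow>
          U \<sigma> t \<tau> ` C \<subseteq> eps_nbhd (1/(real n+1)) (F n)"
        using F(2)[of n] bC unfolding uniformly_absorbing_def by blast
      have "\<forall>k\<ge>nat \<lceil>te\<rceil>. z k \<in> eps_nbhd (1/(real n+1)) (F n)"
      proof (intro allI impI)
        fix k assume "k \<ge> nat \<lceil>te\<rceil>"
        then have "real k \<ge> te" by linarith
        then have "tt k - ta k \<ge> te" using seq[of k] by linarith
        then show "z k \<in> eps_nbhd (1/(real n+1)) (F n)"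
          using te seq[of k] unfolding z_def by blast
      qed
      then show "\<exists>N::nat. \<forall>k\<ge>N. z k \<in> eps_nbhd (1/(real n+1)) (F n)" by blast
    qed
    then obtain N where N: "\<And>n k. k \<ge> N n \<Longrightarrow> z k \<in> eps_nbhd (1/(real n+1)) (F n)"
      by metis
    define G where "G n = F n \<union> z ` {..<N n}" for n
    define S where "S = (\<Inter>n. \<Union>f\<in>G n. cball f (1/(real n+1)))"
    have cS: "compact S" unfolding S_def by (rule cpt_aux) (simp add: G_def F(1))
    have zS: "\<forall>k. z k \<in> S"
    proof
      fix k
      have "z k \<in> (\<Union>f\<in>G n. cball f (1/(real n+1)))" for n
      proof (cases "k < N n")
        case True
        then have "z k \<in> G n" unfolding G_def by blast
        then show ?thesis by (auto intro!: bexI[of _ "z k"])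
      next
        case False
        then have "z k \<in> eps_nbhd (1/(real n+1)) (F n)" using N by simp
        then obtain f where "f \<in> F n" "dist f (z k) < 1/(real n+1)"
          unfolding eps_nbhd_def by blast
        then show ?thesis unfolding G_def by force
      qed
      then show "z k \<in> S" unfolding S_def by blast
    qed
    obtain l r where lr: "l \<in> S" "strict_mono (r :: nat \<Rightarrow> nat)" "(z \<circ> r) \<longlonglongrightarrow> l"
      using seq_compactE[OF compact_imp_seq_compact[OF cS] zS] by blast
    have lK: "l \<in> K" unfolding K_def
    proof (rule INT_I)
      fix n
      define A where "A = (\<Union>f\<in>F n. cball f (1/(real n+1)))"
      note A = A_def
      have clA: "closed A" unfolding A by (intro closed_UN F(1)) auto
      have "eventually (\<lambda>k. (z \<circ> r) k \<in> A) sequentially"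
        unfolding eventually_sequentially
      proof (intro exI allI impI)
        fix k assume "k \<ge> N n"
        then have "r k \<ge> N n" using seq_suble[OF lr(2), of k] by linarith
        then have "z (r k) \<in> eps_nbhd (1/(real n+1)) (F n)" using N by simp
        then obtain f where "f \<in> F n" "dist f (z (r k)) < 1/(real n+1)"
          unfolding eps_nbhd_def by blast
        then show "(z \<circ> r) k \<in> A" unfolding A by force
      qed
      then show "l \<in> (\<Union>f\<in>F n. cball f (1/(real n+1)))" unfolding A[symmetric] using Lim_in_closed_set[OF clA _ _ lr(3)] by simp
    qed
    have "eventually (\<lambda>k. dist ((z \<circ> r) k) l < \<epsilon>) sequentially"
      using lr(3) e by (rule tendstoD)
    then obtain k where "dist (z (r k)) l < \<epsilon>"
      using eventually_sequentially by fastforce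
    then show False using seq[of "r k"] lK unfolding z_def by fastforce
  qed
  then show "uniformly_asymptotically_compact \<Sigma> U"
    unfolding uniformly_asymptotically_compact_def using cK by blast
qed

end
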